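(* Let $n,m$ be positive integers, $V=\{1,\dots,n\}$, and let $CCP$ be the cycle clustering polytope for $V$ and $m$ clusters (defined in the context). Let $K=\{(i_1,i_2),(i_2,i_3),\dots,(i_{\ell-1},i_\ell),(i_\ell,i_1)\}$ be a directed cycle on distinct vertices $i_1,\dots,i_\ell\in V$ with $1<\ell<m$, and let $U\subsetneq K$ be a strict subset. Then the extended subtour inequality $$\sum_{(i,j)\in K} z_{i,j}+\sum_{(i,j)\in U} y_{i,j}\le |K|-1$$ is valid for $CCP$.
   Context: Let $V=\{1,\dots,n\}$, $E=\{\{i,j\}: i,j\in V, i\neq j\}$, $A=\{(i,j)\in V\times V: i\neq j\}$, and $\mathcal{K}=\{1,\dots,m\}$. Cluster indices are taken cyclically: $x_{i,m+1}=x_{i,1}$ and $x_{i,0}=x_{i,m}$. There are binary variables $x_{i,s}$ ($i\in V$, $s\in\mathcal{K}$), $y_{i,j}$ for each $\{i,j\}\in E$ with $i<j$ (with the shorthand $y_{j,i}=y_{i,j}$), and $z_{i,j}$ for each $(i,j)\in A$. The cycle clustering polytope $CCP$ is the convex hull of all binary $(x,y,z)$ satisfying: $\sum_{s\in\mathcal{K}} x_{i,s}=1$ for all $i\in V$; $\sum_{i\in V}x_{i,s}\ge 1$ for all $s\in\mathcal{K}$; $y_{i,j}+z_{i,j}+z_{j,i}\le 1$ for all $\{i,j\}\in E$; $x_{i,s}+x_{j,s}-y_{i,j}+z_{i,j}-x_{j,s+1}-x_{i,s-1}\le 1$ for all $(i,j)\in A$, $s\in\mathcal{K}$; and $x_{i,s}+x_{j,s+1}-z_{i,j}+y_{i,j}-x_{j,s}-x_{i,s+1}\le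 1$ for all $(i,j)\in A$, $s\in\mathcal{K}$. *)

theory Defs
  imports Main "HOL-Analysis.Analysis"
begin

text \<open>A point of the space: x i s (i in V, s in {1..m}), y i j (i < j, edge {i,j}),
  z i j (i ~= j, arc (i,j)). Coordinates outside these index sets are fixed to 0.\<close>
type_synonym ccpoint = "(nat \<Rightarrow> nat \<Rightarrow> real) \<times> (nat \<Rightarrow> nat \<Rightarrow> real) \<times> (nat \<Rightarrow> nat \<Rightarrow> real)"

definition csucc :: "nat \<Rightarrow> nat \<Rightarrow> nat" where
  "csucc m s = (if s = m then 1 else s + 1)"
definition cpred :: "nat \<Rightarrow> nat \<Rightarrow> nat" where
  "cpred m s = (if s = 1 then m else s - 1)"

definition ysym :: "(nat \<Rightarrow> nat \<Rightarrow> real) \<Rightarrow> nat \<Rightarrow> nat \<Rightarrow> real" where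
  "ysym y i j = y (min i j) (max i j)"

definition ccp_points :: "nat \<Rightarrow> nat \<Rightarrow> ccpoint set" where
  "ccp_points n m = {(x, y, z).
     (\<forall>i s. x i s \<in> {0, 1} \<and> (\<not> (i \<in> {1..n} \<and> s \<in> {1..m}) \<longrightarrow> x i s = 0)) \<and>
     (\<forall>i j. y i j \<in> {0, 1} \<and> (\<not> (i \<in> {1..n} \<and> j \<in> {1..n} \<and> i < j) \<longrightarrow> y i j = 0)) \<and>
     (\<forall>i j. z i j \<in> {0, 1} \<and> (\<not> (i \<in> {1..n} \<and> j \<in> {1..n} \<and> i \<noteq> j) \<longrightarrow> z i j = 0)) \<and>
     (\<forall>i\<in>{1..n}. (\<Sum>s=1..m. x i s) = 1) \<and>
     (\<forall>s\<in>{1..m}. (\<Sum>i=1..n. x i s) \<ge> 1) \<and>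
     (\<forall>i\<in>{1..n}. \<forall>j\<in>{1..n}. i < j \<longrightarrow> y i j + z i j + z j i \<le> 1) \<and>
     (\<forall>i\<in>{1..n}. \<forall>j\<in>{1..n}. i \<noteq> j \<longrightarrow> (\<forall>s\<in>{1..m}.
        x i s + x j s - ysym y i j + z i j - x j (csucc m s) - x i (cpred m s) \<le> 1 \<and>
        x i s + x j (csucc m s) - z i j + ysym y i j - x j s - x i (csucc m s) \<le> 1))}"

text \<open>The cycle clustering polytope: convex hull (set of finite convex combinations) of ccp_points.\<close>
definition CCP :: "nat \<Rightarrow> nat \<Rightarrow> ccpoint set" where
  "CCP n m = {(x, y, z). \<exists>(k::nat) (c :: nat \<Rightarrow> real) (q :: nat \<Rightarrow> ccpoint).
      (\<forall>t<k. c t \<ge> 0 \<and> q t \<in> ccp_points n m) \<and> (\<Sum>t<k. c t) = 1 \<and>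
      x = (\<lambda>i s. \<Sum>t<k. c t * fst (q t) i s) \<and>
      y = (\<lambda>i j. \<Sum>t<k. c t * fst (snd (q t)) i j) \<and>
      z = (\<lambda>i j. \<Sum>t<k. c t * snd (snd (q t)) i j)}"

definition cycle_arcs :: "nat list \<Rightarrow> (nat \<times> nat) set" where
  "cycle_arcs cyc = {(cyc ! k, cyc ! ((k + 1) mod length cyc)) | k. k < length cyc}"

end

theory Submission
  imports Defs
begin

lemma unique_one:
  fixes f :: "nat \<Rightarrow> real"
  assumes fin: "finite A" and bin: "\<forall>a\<in>A. f a \<in> {0,1}" and s1: "sum f A = 1"
  shows "\<exists>a\<in>A. f a = 1 \<and> (\<forall>b\<in>A. b \<noteq> a \<longrightarrow> f b = 0)"
proof -
  have "\<exists>a\<in>A. f a \<noteq> 0"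
  proof (rule ccontr)
    assume "\<not> ?thesis"
    then have "sum f A = 0" by simp
    with s1 show False by simp
  qed
  then obtain a where a: "a \<in> A" "f a = 1" using bin by auto
  have "\<forall>b\<in>A. b \<noteq> a \<longrightarrow> f b = 0"
  proof (intro ballI impI, rule ccontr)
    fix b assume b: "b \<in> A" "b \<noteq> a" "f b \<noteq> 0"
    then have fb: "f b = 1" using bin by auto
    have "sum f {a, b} \<le> sum f A"
      by (rule sum_mono2) (use fin a b bin in auto)
    then show False using a fb b s1 by simp
  qed
  with a show ?thesis by blast
qed

lemma ccp_x:
  assumes p: "(x, y, z) \<in> ccp_points n m" and i: "i \<in> {1..n}"
  shows "\<exists>s. s \<in> {1..m} \<and> (\<forall>s'. x i s' = (if s' = s then 1 else 0))"
proof -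
  have bin: "\<forall>s. x i s \<in> {0,1}" and out: "\<forall>s. s \<notin> {1..m} \<longrightarrow> x i s = 0"
    and sm: "(\<Sum>s=1..m. x i s) = 1"
    using p i unfolding ccp_points_def by auto
  obtain s where s: "s \<in> {1..m}" "x i s = 1" "\<forall>b\<in>{1..m}. b \<noteq> s \<longrightarrow> x i b = 0"
    using unique_one[of "{1..m}" "x i"] bin sm by auto
  have "\<forall>s'. x i s' = (if s' = s then 1 else 0)"
    using s out by (metis)
  with s show ?thesis by blast
qed

lemma ccp_zy:
  assumes p: "(x, y, z) \<in> ccp_points n m" and m2: "m \<ge> 2"
    and i: "i \<in> {1..n}" and j: "j \<in> {1..n}" and ij: "i \<noteq> j"
    and s: "s \<in> {1..m}" and t: "t \<in> {1..m}"
    and xi: "\<forall>s'. x i s' = (if s' = s then 1 else 0)"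
    and xj: "\<forall>s'. x j s' = (if s' = t then 1 else 0)"
  shows "z i j = (if t = csucc m s then 1 else 0) \<and> ysym y i j = (if t = s then 1 else 0)"
proof -
  have zb: "z i j \<in> {0,1}" "z j i \<in> {0,1}" using p unfolding ccp_points_def by auto
  have yb: "ysym y i j \<in> {0,1}" using p unfolding ccp_points_def ysym_def by auto
  have yzz: "ysym y i j + z i j + z j i \<le> 1"
  proof (cases "i < j")
    case True then show ?thesis using p i j unfolding ccp_points_def ysym_def by auto
  next
    case False then have "j < i" using ij by simp
    have "\<forall>i\<in>{1..n}. \<forall>j\<in>{1..n}. i < j \<longrightarrow> y i j + z i j + z j i \<le> 1"
      using p unfolding ccp_points_def by auto
    then have "y j i + z j i + z i j \<le> 1" using i j \<open>j < i\<close> by blast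
    then show ?thesis using \<open>j < i\<close> unfolding ysym_def by (simp add: min_def max_def)
  qed
  have c1: "x i s + x j s - ysym y i j + z i j - x j (csucc m s) - x i (cpred m s) \<le> 1"
   and c2: "x i s + x j (csucc m s) - z i j + ysym y i j - x j s - x i (csucc m s) \<le> 1"
    using p i j ij s unfolding ccp_points_def by auto
  have ss: "csucc m s \<noteq> s" "cpred m s \<noteq> s" using m2 s unfolding csucc_def cpred_def by auto
  show ?thesis
  proof (cases "t = s")
    case True
    then show ?thesis using c1 xi xj ss zb yb yzz by auto
  next
    case ts: False
    show ?thesis
    proof (cases "t = csucc m s")
      case True
      then show ?thesis using c2 xi xj ss zb yb ts by auto
    next
      case False
      then show ?thesis using c1 c2 xi xj ss zb yb ts yzz by auto
    qed
  qed
qed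

lemma binary_bound:
  assumes p: "(x, y, z) \<in> ccp_points n m"
    and dist: "distinct cyc" and sub: "set cyc \<subseteq> {1..n}"
    and l1: "1 < length cyc" and lm: "length cyc < m"
    and S: "S \<subseteq> {..<length cyc}" "S \<noteq> {..<length cyc}"
  shows "(\<Sum>k<length cyc. z (cyc ! k) (cyc ! ((k + 1) mod length cyc)) +
           (if k \<in> S then ysym y (cyc ! k) (cyc ! ((k + 1) mod length cyc)) else 0))
         \<le> real (length cyc) - 1"
proof -
  define l where "l = length cyc"
  have m2: "m \<ge> 2" using l1 lm by simp
  have "\<forall>i\<in>{1..n}. \<exists>s. s \<in> {1..m} \<and> (\<forall>s'. x i s' = (if s' = s then 1 else 0))"
    using ccp_x[OF p] by blast
  then obtain cl where cl: "\<And>i. i\<in>{1..n} \<Longrightarrow> cl i \<in> {1..m} \<and> (\<forall>s'. x i s' = (if s' = cl i then 1 else 0))"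
    by metis
  define nx where "nx k = (k + 1) mod l" for k
  have nxl: "nx k < l" for k using l1 unfolding nx_def l_def by (intro mod_less_divisor) auto
  have inV: "k < l \<Longrightarrow> cyc ! k \<in> {1..n}" for k using sub unfolding l_def by (meson nth_mem subsetD)
  have neq: "k < l \<Longrightarrow> cyc ! k \<noteq> cyc ! nx k" for k
  proof
    assume k: "k < l" and e: "cyc ! k = cyc ! nx k"
    have "k = nx k" using nth_eq_iff_index_eq[OF dist, of k "nx k"] nxl[of k] k e unfolding l_def by simp
    moreover have "k \<noteq> nx k"
    proof (cases "k + 1 < l")
      case True then show ?thesis unfolding nx_def by simp
    next
      case False
      then have "k + 1 = l" using k by simp
      then have "nx k = 0" unfolding nx_def by simp
      then show ?thesis using \<open>k + 1 = l\<close> l1 unfolding l_def by auto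
    qed
    ultimately show False by simp
  qed
  have char: "z (cyc ! k) (cyc ! nx k) = (if cl (cyc ! nx k) = csucc m (cl (cyc ! k)) then 1 else 0)
     \<and> ysym y (cyc ! k) (cyc ! nx k) = (if cl (cyc ! nx k) = cl (cyc ! k) then 1 else 0)"
    if k: "k < l" for k
    using ccp_zy[OF p m2 inV[OF k] inV[OF nxl] neq[OF k]] cl[OF inV[OF k]] cl[OF inV[OF nxl]]
    by blast
  have cs: "csucc m s \<noteq> s" for s using m2 unfolding csucc_def by auto
  define dn where "dn k = (if cl (cyc ! nx k) = csucc m (cl (cyc ! k)) then 1 else 0 :: nat)" for k
  define g where "g k = z (cyc ! k) (cyc ! nx k) + (if k \<in> S then ysym y (cyc ! k) (cyc ! nx k) else 0)" for k
  have gle: "g k \<le> 1" if "k < l" for k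
    using char[OF that] cs unfolding g_def by auto
  have ex: "\<exists>k0<l. dn k0 = 0 \<and> (k0 \<notin> S \<or> cl (cyc ! nx k0) \<noteq> cl (cyc ! k0))"
  proof (rule ccontr)
    assume "\<not> ?thesis"
    then have H: "\<forall>k<l. dn k \<noteq> 0 \<or> (k \<in> S \<and> cl (cyc ! nx k) = cl (cyc ! k))" by auto
    have csm: "csucc m s mod m = (s + 1) mod m" for s unfolding csucc_def using m2 by (auto simp: mod_Suc)
    have step: "cl (cyc ! nx k) mod m = (cl (cyc ! k) + dn k) mod m" if k: "k < l" for k
    proof (cases "dn k = 0")
      case True then have "cl (cyc ! nx k) = cl (cyc ! k)" using H k by auto then show ?thesis using True by simp
    next
      case False then show ?thesis using csm unfolding dn_def by (auto split: if_splits)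
    qed
    define f where "f j = cl (cyc ! (j mod l))" for j
    have lpos: "l > 0" using l1 unfolding l_def by auto
    have fstep: "f (Suc j) mod m = (f j + dn (j mod l)) mod m" for j
    proof -
      have "nx (j mod l) = Suc j mod l" unfolding nx_def by (simp add: mod_Suc_eq)
      then show ?thesis using step[of "j mod l"] lpos unfolding f_def by simp
    qed
    have ind: "f j mod m = (f 0 + (\<Sum>k<j. dn (k mod l))) mod m" for j
    proof (induction j)
      case 0 then show ?case by simp
    next
      case (Suc j)
      have "f (Suc j) mod m = (f j mod m + dn (j mod l)) mod m" using fstep by (simp add: mod_add_left_eq)
      also have "\<dots> = ((f 0 + (\<Sum>k<j. dn (k mod l))) mod m + dn (j mod l)) mod m" using Suc by simp
      also have "\<dots> = (f 0 + (\<Sum>k<Suc j. dn (k mod l))) mod m" by (simp add: mod_add_left_eq add.assoc)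
      finally show ?case .
    qed
    define D where "D = (\<Sum>k<l. dn k)"
    have "(\<Sum>k<l. dn (k mod l)) = D" unfolding D_def by (rule sum.cong) auto
    then have e: "f 0 mod m = (f 0 + D) mod m" using ind[of l] unfolding f_def by simp
    have "D \<le> (\<Sum>k<l. 1)" unfolding D_def by (rule sum_mono) (simp add: dn_def)
    then have Dl: "D < m" using lm unfolding l_def by simp
    have "m dvd D" using e by (metis add_diff_cancel_left' le_add1 mod_eq_dvd_iff_nat)
    then have "D = 0" using Dl by (metis dvd_imp_le gr0I not_less)
    then have "\<forall>k<l. dn k = 0" unfolding D_def by simp
    then have "{..<l} \<subseteq> S" using H by auto
    then show False using S unfolding l_def by auto
  qed
  then obtain k0 where k0: "k0 < l" "dn k0 = 0" "k0 \<notin> S \<or> cl (cyc ! nx k0) \<noteq> cl (cyc ! k0)" by blast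
  have g0: "g k0 = 0" using char[OF k0(1)] k0 unfolding g_def dn_def by auto
  have "(\<Sum>k<l. g k) = g k0 + (\<Sum>k\<in>{..<l} - {k0}. g k)"
    using k0(1) by (simp add: sum.remove)
  also have "\<dots> \<le> 0 + real (card ({..<l} - {k0})) * 1"
    using g0 gle by (intro add_mono sum_bounded_above) auto
  also have "\<dots> = real l - 1" using k0(1) by simp
  finally show ?thesis unfolding g_def nx_def l_def .
qed

lemma main_aux:
  assumes dist: "distinct cyc" and sub: "set cyc \<subseteq> {1..n}"
    and l1: "1 < length cyc" and lm: "length cyc < m"
    and U: "U \<subset> cycle_arcs cyc" and pin: "(x, y, z) \<in> CCP n m"
  shows "(\<Sum>(i, j) \<in> cycle_arcs cyc. z i j) + (\<Sum>(i, j) \<in> U. ysym y i j)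
             \<le> real (card (cycle_arcs cyc)) - 1"
proof -
  define l where "l = length cyc"
  define arc where "arc k = (cyc ! k, cyc ! ((k + 1) mod l))" for k
  define S where "S = {k\<in>{..<l}. arc k \<in> U}"
  have K: "cycle_arcs cyc = arc ` {..<l}" unfolding cycle_arcs_def arc_def l_def by auto
  have inj: "inj_on arc {..<l}"
    unfolding inj_on_def arc_def l_def using nth_eq_iff_index_eq[OF dist] by auto
  have cardK: "card (cycle_arcs cyc) = l" using K inj by (simp add: card_image)
  have US: "U = arc ` S" using U K unfolding S_def by auto
  have Ssub: "S \<subseteq> {..<l}" unfolding S_def by auto
  have Sne: "S \<noteq> {..<l}"
  proof
    assume "S = {..<l}"
    then have "U = cycle_arcs cyc" using US K by simp
    then show False using U by simp
  qed
  have conv: "(\<Sum>(i, j) \<in> cycle_arcs cyc. zz i j) + (\<Sum>(i, j) \<in> U. ysym yy i j)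
     = (\<Sum>k<l. zz (cyc ! k) (cyc ! ((k + 1) mod l)) +
           (if k \<in> S then ysym yy (cyc ! k) (cyc ! ((k + 1) mod l)) else 0))" for zz yy :: "nat \<Rightarrow> nat \<Rightarrow> real"
  proof -
    have a: "(\<Sum>(i, j) \<in> cycle_arcs cyc. zz i j) = (\<Sum>k<l. zz (cyc ! k) (cyc ! ((k + 1) mod l)))"
      unfolding K sum.reindex[OF inj] by (simp add: arc_def)
    have "(\<Sum>(i, j) \<in> U. ysym yy i j) = (\<Sum>k\<in>S. ysym yy (cyc ! k) (cyc ! ((k + 1) mod l)))"
      unfolding US sum.reindex[OF inj_on_subset[OF inj Ssub]] by (simp add: arc_def)
    also have "\<dots> = (\<Sum>k\<in>{..<l} \<inter> S. ysym yy (cyc ! k) (cyc ! ((k + 1) mod l)))"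
      using Ssub by (simp add: Int_absorb1)
    also have "\<dots> = (\<Sum>k<l. if k \<in> S then ysym yy (cyc ! k) (cyc ! ((k + 1) mod l)) else 0)"
      by (rule sum.inter_restrict) simp
    finally show ?thesis using a by (simp add: sum.distrib)
  qed
  have "\<exists>(T::nat) (c :: nat \<Rightarrow> real) (q :: nat \<Rightarrow> ccpoint).
      (\<forall>t<T. c t \<ge> 0 \<and> q t \<in> ccp_points n m) \<and> (\<Sum>t<T. c t) = 1 \<and>
      x = (\<lambda>i s. \<Sum>t<T. c t * fst (q t) i s) \<and>
      y = (\<lambda>i j. \<Sum>t<T. c t * fst (snd (q t)) i j) \<and>
      z = (\<lambda>i j. \<Sum>t<T. c t * snd (snd (q t)) i j)"
    using pin unfolding CCP_def mem_Collect_eq case_prod_conv .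
  from this show ?thesis
  proof (elim exE conjE)
  fix T c q
  assume cq1: "\<forall>t<T. c t \<ge> 0 \<and> q t \<in> ccp_points n m" and cq2: "(\<Sum>t<T. c t) = 1"
    and cq3: "x = (\<lambda>i s. \<Sum>t<T. c t * fst (q t) i s)"
    and cq4: "y = (\<lambda>i j. \<Sum>t<T. c t * fst (snd (q t)) i j)"
    and cq5: "z = (\<lambda>i j. \<Sum>t<T. c t * snd (snd (q t)) i j)"
  note cq = cq1 cq2 cq3 cq4 cq5
  define G where "G t = (\<Sum>k<l. snd (snd (q t)) (cyc ! k) (cyc ! ((k + 1) mod l)) +
           (if k \<in> S then ysym (fst (snd (q t))) (cyc ! k) (cyc ! ((k + 1) mod l)) else 0))" for t
  have Gb: "G t \<le> real l - 1" if t: "t < T" for t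
  proof -
    obtain xt yt zt where qt: "q t = (xt, yt, zt)" by (cases "q t")
    have "q t \<in> ccp_points n m" using cq(1) t by blast
    then have "(xt, yt, zt) \<in> ccp_points n m" using qt by simp
    from binary_bound[OF this dist sub l1 lm Ssub[unfolded l_def] Sne[unfolded l_def]]
    show ?thesis unfolding G_def qt l_def fst_conv snd_conv .
  qed
  have "(\<Sum>(i, j) \<in> cycle_arcs cyc. z i j) + (\<Sum>(i, j) \<in> U. ysym y i j)
     = (\<Sum>k<l. z (cyc ! k) (cyc ! ((k + 1) mod l)) +
           (if k \<in> S then ysym y (cyc ! k) (cyc ! ((k + 1) mod l)) else 0))" by (rule conv)
  also have "\<dots> = (\<Sum>k<l. \<Sum>t<T. c t * (snd (snd (q t)) (cyc ! k) (cyc ! ((k + 1) mod l)) +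
           (if k \<in> S then ysym (fst (snd (q t))) (cyc ! k) (cyc ! ((k + 1) mod l)) else 0)))"
  proof (rule sum.cong[OF refl])
    fix k
    show "z (cyc ! k) (cyc ! ((k + 1) mod l)) +
           (if k \<in> S then ysym y (cyc ! k) (cyc ! ((k + 1) mod l)) else 0) =
          (\<Sum>t<T. c t * (snd (snd (q t)) (cyc ! k) (cyc ! ((k + 1) mod l)) +
           (if k \<in> S then ysym (fst (snd (q t))) (cyc ! k) (cyc ! ((k + 1) mod l)) else 0)))"
      unfolding cq(4,5) by (cases "k \<in> S") (simp_all add: ysym_def distrib_left sum.distrib)
  qed
  also have "\<dots> = (\<Sum>t<T. c t * G t)"
    unfolding G_def by (subst sum.swap) (simp add: sum_distrib_left)
  also have "\<dots> \<le> (\<Sum>t<T. c t * (real l - 1))"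
    using cq(1) Gb by (intro sum_mono mult_left_mono) auto
  also have "\<dots> = real l - 1" using cq(2) by (simp add: sum_distrib_right[symmetric])
  finally show ?thesis using cardK by simp
  qed
qed

theorem mainTheorem5:
  fixes n m :: nat and cyc :: "nat list" and U :: "(nat \<times> nat) set"
  assumes "n \<ge> 1" and "m \<ge> 1"
    and "distinct cyc" and "set cyc \<subseteq> {1..n}"
    and "1 < length cyc" and "length cyc < m"
    and "U \<subset> cycle_arcs cyc"
  shows "\<forall>(x, y, z) \<in> CCP n m.
           (\<Sum>(i, j) \<in> cycle_arcs cyc. z i j) + (\<Sum>(i, j) \<in> U. ysym y i j)
             \<le> real (card (cycle_arcs cyc)) - 1"
  using main_aux[OF assms(3-7)] by blast

end
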